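(* Let $K\ge2$, $\varepsilon>0$, $Z^*\in\mathbb{R}^K_{>0}$, and $\gamma\in\mathcal{P}^\varepsilon(K)$ (the value of the rung density at the current $\mu$). For $\eta\ge0$ and $Z\in\mathbb{R}^K_{>0}$ let $o^*_\eta(Z)$ be the steady state of the tilt mean field, i.e. the solution $o\in\mathbb{R}^K_{>0}$ of $g^o_k(\pi^{\mathrm{TSS},\eta}(o),Z,o)=0$ for all $k$, and define $$D_\eta(Z)=\nabla_Z V_\gamma(Z)\cdot g^Z\big(\pi^{\mathrm{TSS},\eta}(o^*_\eta(Z)),Z\big),$$ the time derivative of $V_\gamma(Z(t))$ at the point $Z$ along the ODE $\dot Z=g^Z(\pi^{\mathrm{TSS},\eta}(o^*_\eta(Z)),Z)$. Then for all $Z\in\mathbb{R}^K_{>0}$ and all $\eta'>\eta\ge0$, $$D_{\eta'}(Z)\le D_\eta(Z)\le 0,$$ and both inequalities are strict unless $Z$ is a scalar multiple of $Z^*$, in which case both derivatives equal $0$.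
   Context: $\mathcal{P}^\varepsilon(K)$ is the set of probability vectors on $\{1,\dots,K\}$ with all entries $\ge\varepsilon$. For $\pi\in\mathcal P^\varepsilon(K)$ and $Z\in\mathbb{R}^K_{>0}$, the mean field of the partition function estimates is $g^Z_k(\pi,Z)=\dfrac{Z_k^*}{\sum_\ell\pi_\ell Z^*_\ell/Z_\ell}-Z_k$, and the mean field of the tilts is $g^o_k(\pi,Z,o)=\dfrac{1}{\gamma_k}\dfrac{\pi_kZ_k^*/Z_k}{\sum_\ell\pi_\ell Z_\ell^*/Z_\ell}-o_k$. The (unregularized) visit-control rung density with parameter $\eta\ge0$ is $\pi^{\mathrm{TSS},\eta}_k(o)=\dfrac{\gamma_k o_k^{-\eta}}{\sum_\ell\gamma_\ell o_\ell^{-\eta}}$. The Lyapunov function is the relative entropy $V_\gamma(Z)=-\sum_k\gamma_k\log(r_k/\gamma_k)$ with $r_k=\dfrac{\gamma_kZ_k^*/Z_k}{\sum_\ell\gamma_\ell Z^*_\ell/Z_\ell}$. *)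

theory Defs
  imports "HOL-Analysis.Analysis"
begin

text \<open>Vectors in R^K are modelled as real^'k for a finite index type 'k with CARD('k) = K.\<close>

definition Peps :: "real \<Rightarrow> (real^'k::finite) set" where
  "Peps \<epsilon> = {p. (\<forall>k. p$k \<ge> \<epsilon>) \<and> (\<Sum>k\<in>UNIV. p$k) = 1}"

definition gZ :: "real^'k::finite \<Rightarrow> real^'k \<Rightarrow> real^'k \<Rightarrow> real^'k" where
  "gZ Zs \<pi> Z = (\<chi> k. Zs$k / (\<Sum>l\<in>UNIV. \<pi>$l * Zs$l / Z$l) - Z$k)"

definition go :: "real^'k::finite \<Rightarrow> real^'k \<Rightarrow> real^'k \<Rightarrow> real^'k \<Rightarrow> real^'k \<Rightarrow> real^'k" where
  "go \<gamma> Zs \<pi> Z ot = (\<chi> k. (1 / \<gamma>$k) * ((\<pi>$k * Zs$k / Z$k) / (\<Sum>l\<in>UNIV. \<pi>$l * Zs$l / Z$l)) - ot$k)"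

definition piTSS :: "real^'k::finite \<Rightarrow> real \<Rightarrow> real^'k \<Rightarrow> real^'k" where
  "piTSS \<gamma> \<eta> ot = (\<chi> k. \<gamma>$k * (ot$k) powr (-\<eta>) / (\<Sum>l\<in>UNIV. \<gamma>$l * (ot$l) powr (-\<eta>)))"

definition rr :: "real^'k::finite \<Rightarrow> real^'k \<Rightarrow> real^'k \<Rightarrow> real^'k" where
  "rr \<gamma> Zs Z = (\<chi> k. (\<gamma>$k * Zs$k / Z$k) / (\<Sum>l\<in>UNIV. \<gamma>$l * Zs$l / Z$l))"

definition Vg :: "real^'k::finite \<Rightarrow> real^'k \<Rightarrow> real^'k \<Rightarrow> real" where
  "Vg \<gamma> Zs Z = - (\<Sum>k\<in>UNIV. \<gamma>$k * ln (rr \<gamma> Zs Z $ k / \<gamma>$k))"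

definition ostar :: "real^'k::finite \<Rightarrow> real^'k \<Rightarrow> real \<Rightarrow> real^'k \<Rightarrow> real^'k" where
  "ostar \<gamma> Zs \<eta> Z = (THE ot. (\<forall>k. ot$k > 0) \<and> go \<gamma> Zs (piTSS \<gamma> \<eta> ot) Z ot = 0)"

definition Dfun :: "real^'k::finite \<Rightarrow> real^'k \<Rightarrow> real \<Rightarrow> real^'k \<Rightarrow> real" where
  "Dfun \<gamma> Zs \<eta> Z = frechet_derivative (Vg \<gamma> Zs) (at Z) (gZ Zs (piTSS \<gamma> \<eta> (ostar \<gamma> Zs \<eta> Z)) Z)"

end

theory Submission
  imports Defs
begin

lemma hd_nth: "((\<lambda>x::real^'n::finite. x$k) has_derivative (\<lambda>h. h$k)) F"
  by (rule bounded_linear_imp_has_derivative[OF bounded_linear_vec_nth])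

definition Wf :: "real^'k::finite \<Rightarrow> real^'k \<Rightarrow> real^'k \<Rightarrow> real" where
  "Wf \<gamma> Zs Y = (\<Sum>k\<in>UNIV. \<gamma>$k * (ln (Y$k) - ln (Zs$k))) + ln (\<Sum>l\<in>UNIV. \<gamma>$l * Zs$l / Y$l)"

definition Wd :: "real^'k::finite \<Rightarrow> real^'k \<Rightarrow> real^'k \<Rightarrow> real^'k \<Rightarrow> real" where
  "Wd \<gamma> Zs Z = (\<lambda>Y. (\<Sum>k\<in>UNIV. \<gamma> $ k * (Y $ k * inverse (Z $ k))) +
             (\<Sum>l\<in>UNIV. - (\<gamma> $ l * Zs $ l * Y $ l / (Z $ l * Z $ l))) *
             inverse (\<Sum>l\<in>UNIV. \<gamma> $ l * Zs $ l / Z $ l))"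

lemma W_deriv:
  fixes Zs \<gamma> Z :: "real^'k::finite"
  assumes Z: "\<forall>k. Z$k > 0" and Zs: "\<forall>k. Zs$k > 0" and g: "\<forall>k. \<gamma>$k > 0"
  shows "(Wf \<gamma> Zs has_derivative Wd \<gamma> Zs Z) (at Z)"
proof -
  have A: "(\<Sum>l\<in>UNIV. \<gamma>$l * Zs$l / Z$l) > 0"
    by (rule sum_pos) (use Z Zs g in auto)
  show ?thesis unfolding Wf_def Wd_def
    using Z Zs g A apply (auto intro!: derivative_eq_intros hd_nth)
    by (metis less_irrefl)
qed

lemma Vg_eq_Wf:
  fixes Zs \<gamma> Y :: "real^'k::finite"
  assumes Y: "\<forall>k. Y$k > 0" and Zs: "\<forall>k. Zs$k > 0" and g: "\<forall>k. \<gamma>$k > 0"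
    and s1: "(\<Sum>k\<in>UNIV. \<gamma>$k) = 1"
  shows "Vg \<gamma> Zs Y = Wf \<gamma> Zs Y"
proof -
  define A where "A = (\<Sum>l\<in>UNIV. \<gamma>$l * Zs$l / Y$l)"
  have A: "A > 0" unfolding A_def
    by (rule sum_pos) (use Y Zs g in auto)
  have e: "ln (rr \<gamma> Zs Y $ k / \<gamma>$k) = ln (Zs$k) - ln (Y$k) - ln A" for k
  proof -
    have "rr \<gamma> Zs Y $ k / \<gamma>$k = Zs$k / Y$k / A"
      unfolding rr_def A_def using g[rule_format, of k] by simp
    then show ?thesis using Y[rule_format,of k] Zs[rule_format,of k] A by (simp add: ln_div ln_mult)
  qed
  have "Vg \<gamma> Zs Y = - (\<Sum>k\<in>UNIV. \<gamma>$k * (ln (Zs$k) - ln (Y$k)) - \<gamma>$k * ln A)"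
    unfolding Vg_def e by (simp add: algebra_simps)
  also have "\<dots> = (\<Sum>k\<in>UNIV. \<gamma>$k * (ln (Y$k) - ln (Zs$k))) + ln A * (\<Sum>k\<in>UNIV. \<gamma>$k)"
    by (simp add: sum.distrib sum_subtractf sum_distrib_left sum_distrib_right algebra_simps sum_negf[symmetric])
  also have "\<dots> = Wf \<gamma> Zs Y" unfolding Wf_def A_def s1 by simp
  finally show ?thesis .
qed

lemma Vg_deriv:
  fixes Zs \<gamma> Z :: "real^'k::finite"
  assumes Z: "\<forall>k. Z$k > 0" and Zs: "\<forall>k. Zs$k > 0" and g: "\<forall>k. \<gamma>$k > 0"
    and s1: "(\<Sum>k\<in>UNIV. \<gamma>$k) = 1"
  shows "(Vg \<gamma> Zs has_derivative Wd \<gamma> Zs Z) (at Z)"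
proof (rule has_derivative_transform_eventually[where s=UNIV])
  show "(Wf \<gamma> Zs has_derivative Wd \<gamma> Zs Z) (at Z)" by (rule W_deriv[OF Z Zs g])
  have "\<forall>\<^sub>F Y in at Z. \<forall>k. Y$k > 0"
  proof (rule eventually_all_finite)
    fix k
    have "((\<lambda>Y. Y$k) \<longlongrightarrow> Z$k) (at Z)"
      by (intro tendsto_vec_nth tendsto_ident_at)
    then show "\<forall>\<^sub>F Y in at Z. Y$k > 0"
      using Z order_tendstoD(1) by blast
  qed
  then show "\<forall>\<^sub>F Y in at Z. Wf \<gamma> Zs Y = Vg \<gamma> Zs Y"
    by eventually_elim (use Vg_eq_Wf[OF _ Zs g s1] in auto)
  show "Wf \<gamma> Zs Z = Vg \<gamma> Zs Z" using Vg_eq_Wf[OF Z Zs g s1] by simp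
qed auto

lemma Wd_gZ:
  fixes Zs \<gamma> Z \<pi> :: "real^'k::finite"
  assumes Z: "\<forall>k. Z$k > 0" and Zs: "\<forall>k. Zs$k > 0" and g: "\<forall>k. \<gamma>$k > 0"
    and s1: "(\<Sum>k\<in>UNIV. \<gamma>$k) = 1"
    and P: "(\<Sum>l\<in>UNIV. \<pi>$l * Zs$l / Z$l) > 0"
  shows "Wd \<gamma> Zs Z (gZ Zs \<pi> Z) =
    ((\<Sum>l\<in>UNIV. \<gamma>$l * (Zs$l / Z$l))^2 - (\<Sum>l\<in>UNIV. \<gamma>$l * (Zs$l / Z$l)^2))
     / ((\<Sum>l\<in>UNIV. \<pi>$l * Zs$l / Z$l) * (\<Sum>l\<in>UNIV. \<gamma>$l * (Zs$l / Z$l)))"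
proof -
  define P where "P = (\<Sum>l\<in>UNIV. \<pi>$l * Zs$l / Z$l)"
  define A where "A = (\<Sum>l\<in>UNIV. \<gamma>$l * (Zs$l / Z$l))"
  define M where "M = (\<Sum>l\<in>UNIV. \<gamma>$l * (Zs$l / Z$l)^2)"
  have Pp: "P > 0" using P P_def by simp
  have A: "A > 0" unfolding A_def
    by (rule sum_pos) (use Z Zs g in auto)
  have A': "(\<Sum>l\<in>UNIV. \<gamma> $ l * Zs $ l / Z $ l) = A" unfolding A_def by simp
  have 1: "(\<Sum>k\<in>UNIV. \<gamma> $ k * (gZ Zs \<pi> Z $ k * inverse (Z $ k))) = A / P - 1"
  proof -
    have "(\<Sum>k\<in>UNIV. \<gamma> $ k * (gZ Zs \<pi> Z $ k * inverse (Z $ k)))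
        = (\<Sum>k\<in>UNIV. \<gamma>$k * (Zs$k / Z$k) / P - \<gamma>$k)"
      apply (rule sum.cong[OF refl])
      using Z unfolding gZ_def P_def by (auto simp: field_simps less_imp_neq[symmetric])
    also have "\<dots> = A / P - 1" unfolding A_def
      by (simp only: sum_subtractf sum_divide_distrib[symmetric] s1)
    finally show ?thesis .
  qed
  have 2: "(\<Sum>l\<in>UNIV. - (\<gamma> $ l * Zs $ l * gZ Zs \<pi> Z $ l / (Z $ l * Z $ l))) = A - M / P"
  proof -
    have "(\<Sum>l\<in>UNIV. - (\<gamma> $ l * Zs $ l * gZ Zs \<pi> Z $ l / (Z $ l * Z $ l)))
        = (\<Sum>k\<in>UNIV. \<gamma>$k * (Zs$k / Z$k) - \<gamma>$k * (Zs$k / Z$k)^2 / P)"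
      apply (rule sum.cong[OF refl])
      using Z unfolding gZ_def P_def by (auto simp: field_simps power2_eq_square less_imp_neq[symmetric])
    also have "\<dots> = A - M / P" unfolding A_def M_def
      by (simp only: sum_subtractf sum_divide_distrib[symmetric])
    finally show ?thesis .
  qed
  have "Wd \<gamma> Zs Z (gZ Zs \<pi> Z) = A / P - 1 + (A - M / P) / A"
    unfolding Wd_def 1 2 A' by (simp add: divide_inverse)
  also have "\<dots> = (A^2 - M) / (P * A)"
    using A Pp by (simp add: field_simps power2_eq_square)
  finally show ?thesis unfolding A_def M_def P_def .
qed

lemma pair_pos:
  fixes x y e e' :: real
  assumes x: "x > 0" and y: "y > 0" and ee: "e' < e"
  shows "x powr e * y powr (e'-1) - x powr e' * y powr (e-1) + (y powr e * x powr (e'-1) - y powr e' * x powr (e-1))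
     = x powr (e'-1) * y powr (e'-1) * (x - y) * (x powr (e-e') - y powr (e-e'))"
    and "x powr (e'-1) * y powr (e'-1) * (x - y) * (x powr (e-e') - y powr (e-e')) \<ge> 0"
    and "x \<noteq> y \<Longrightarrow> x powr (e'-1) * y powr (e'-1) * (x - y) * (x powr (e-e') - y powr (e-e')) > 0"
proof -
  define d where "d = e - e'"
  have d: "d > 0" using ee d_def by simp
  have h0: "z powr t = z * z powr (t-1)" if "z > 0" for z t :: real
    using powr_add[of z 1 "t-1"] that by simp
  have h2: "z powr e' = z * z powr (e'-1)" if "z > 0" for z
    using h0[OF that, of e'] by simp
  have h3: "z powr (e-1) = z powr (e'-1) * z powr d" if "z > 0" for z
    using that by (simp add: d_def powr_add[symmetric])
  have h1: "z powr e = z * z powr (e'-1) * z powr d" if "z > 0" for z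
    using h0[OF that, of e] h3[OF that] by simp
  show "x powr e * y powr (e'-1) - x powr e' * y powr (e-1) + (y powr e * x powr (e'-1) - y powr e' * x powr (e-1))
     = x powr (e'-1) * y powr (e'-1) * (x - y) * (x powr (e-e') - y powr (e-e'))"
    unfolding d_def[symmetric] h1[OF x] h1[OF y] h2[OF x] h2[OF y] h3[OF x] h3[OF y]
    by (simp add: algebra_simps)
  have s: "(x - y) * (x powr d - y powr d) \<ge> 0"
  proof (cases "x \<le> y")
    case True
    then have "x powr d \<le> y powr d" using x d by (simp add: powr_mono2)
    then show ?thesis using True by (simp add: mult_nonpos_nonpos)
  next
    case False
    then have "y powr d \<le> x powr d" using y d by (simp add: powr_mono2)
    then show ?thesis using False by simp
  qed
  have s2: "(x - y) * (x powr d - y powr d) > 0" if "x \<noteq> y"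
  proof (cases "x < y")
    case True
    then have "x powr d < y powr d" using x d by (simp add: powr_less_mono2)
    then show ?thesis using True by (simp add: mult_neg_neg)
  next
    case False
    then have "y < x" using that by simp
    then have "y powr d < x powr d" using y d by (simp add: powr_less_mono2)
    then show ?thesis using \<open>y < x\<close> by simp
  qed
  have pq: "x powr (e'-1) * y powr (e'-1) > 0" using x y by simp
  show "x powr (e'-1) * y powr (e'-1) * (x - y) * (x powr (e-e') - y powr (e-e')) \<ge> 0"
    using mult_nonneg_nonneg[OF less_imp_le[OF pq] s] unfolding d_def by (simp add: mult.assoc)
  show "x \<noteq> y \<Longrightarrow> x powr (e'-1) * y powr (e'-1) * (x - y) * (x powr (e-e') - y powr (e-e')) > 0"
    using mult_pos_pos[OF pq s2] unfolding d_def by (simp add: mult.assoc)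
qed

lemma ratio_mono:
  fixes \<gamma> :: "real^'k::finite" and a :: "'k \<Rightarrow> real"
  assumes g: "\<forall>k. \<gamma>$k > 0" and a: "\<forall>k. a k > 0" and ee: "e' < e" and ne: "a k0 \<noteq> a l0"
  shows "(\<Sum>k\<in>UNIV. \<gamma>$k * a k powr e') * (\<Sum>k\<in>UNIV. \<gamma>$k * a k powr (e-1))
       < (\<Sum>k\<in>UNIV. \<gamma>$k * a k powr e) * (\<Sum>k\<in>UNIV. \<gamma>$k * a k powr (e'-1))"
proof -
  define F where "F k l = \<gamma>$k * \<gamma>$l * (a k powr e * a l powr (e'-1) - a k powr e' * a l powr (e-1))" for k l
  have eq: "(\<Sum>k\<in>UNIV. \<gamma>$k * a k powr e) * (\<Sum>k\<in>UNIV. \<gamma>$k * a k powr (e'-1))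
      - (\<Sum>k\<in>UNIV. \<gamma>$k * a k powr e') * (\<Sum>k\<in>UNIV. \<gamma>$k * a k powr (e-1))
      = (\<Sum>k\<in>UNIV. \<Sum>l\<in>UNIV. F k l)"
    unfolding F_def sum_product sum_subtractf[symmetric]
    by (intro sum.cong refl) (simp add: algebra_simps)
  have sw: "(\<Sum>k\<in>UNIV. \<Sum>l\<in>UNIV. F k l) = (\<Sum>k\<in>UNIV. \<Sum>l\<in>UNIV. F l k)"
    by (rule sum.swap)
  have pr: "F k l + F l k = \<gamma>$k * \<gamma>$l * (a k powr (e'-1) * a l powr (e'-1) * (a k - a l) * (a k powr (e-e') - a l powr (e-e')))" for k l
    unfolding F_def pair_pos(1)[OF a[rule_format] a[rule_format] ee, symmetric]
    by (simp add: algebra_simps)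
  have "0 < (\<Sum>k\<in>UNIV. \<Sum>l\<in>UNIV. F k l + F l k)"
  proof (rule sum_pos2[where i=k0])
    show "0 < (\<Sum>l\<in>UNIV. F k0 l + F l k0)"
    proof (rule sum_pos2[where i=l0])
      show "0 < F k0 l0 + F l0 k0" unfolding pr
        using pair_pos(3)[OF a[rule_format] a[rule_format] ee ne] g by simp
      show "0 \<le> F k0 l + F l k0" for l unfolding pr
        using pair_pos(2)[OF a[rule_format] a[rule_format] ee] g by (simp add: less_imp_le)
    qed auto
    show "0 \<le> (\<Sum>l\<in>UNIV. F k l + F l k)" for k
      apply (rule sum_nonneg) unfolding pr
      using pair_pos(2)[OF a[rule_format] a[rule_format] ee] g by (simp add: less_imp_le)
  qed auto
  also have "\<dots> = 2 * (\<Sum>k\<in>UNIV. \<Sum>l\<in>UNIV. F k l)"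
    using sw by (simp add: sum.distrib)
  finally show ?thesis using eq by simp
qed

definition ocand :: "real^'k::finite \<Rightarrow> real^'k \<Rightarrow> real \<Rightarrow> real^'k \<Rightarrow> real^'k" where
  "ocand \<gamma> Zs \<eta> Z = (\<chi> k. (Zs$k/Z$k) powr (1/(1+\<eta>)) / (\<Sum>l\<in>UNIV. \<gamma>$l * (Zs$l/Z$l) powr (1/(1+\<eta>))))"

lemma pi_cand:
  fixes Zs \<gamma> Z :: "real^'k::finite"
  assumes Z: "\<forall>k. Z$k > 0" and Zs: "\<forall>k. Zs$k > 0" and g: "\<forall>k. \<gamma>$k > 0" and eta: "\<eta> \<ge> 0"
  shows "piTSS \<gamma> \<eta> (ocand \<gamma> Zs \<eta> Z) $ k =
     \<gamma>$k * (Zs$k/Z$k) powr (1/(1+\<eta>) - 1) / (\<Sum>l\<in>UNIV. \<gamma>$l * (Zs$l/Z$l) powr (1/(1+\<eta>) - 1))"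
proof -
  define e where "e = 1/(1+\<eta>)"
  define G where "G = (\<Sum>l\<in>UNIV. \<gamma>$l * (Zs$l/Z$l) powr e)"
  have a: "Zs$k/Z$k > 0" for k using Z Zs by simp
  have ap: "(Zs$k/Z$k) powr t > 0" for k t using a[of k] by (metis powr_gt_zero less_irrefl)
  have G: "G > 0" unfolding G_def by (rule sum_pos) (use g ap in \<open>auto intro!: mult_pos_pos\<close>)
  have ee: "e * - \<eta> = e - 1" unfolding e_def using eta by (simp add: field_simps)
  have ee2: "- (e * \<eta>) = e - 1" using ee by simp
  have c0: "(x powr e / G) powr (-\<eta>) = x powr (e - 1) / G powr (-\<eta>)" if "x > 0" for x
    using that G by (simp add: powr_divide powr_powr ee2)
  have c: "ocand \<gamma> Zs \<eta> Z $ l powr (-\<eta>) = (Zs$l/Z$l) powr (e - 1) / G powr (-\<eta>)" for l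
    unfolding ocand_def e_def[symmetric] G_def[symmetric] vec_lambda_beta
    by (rule c0[OF a])
  have "piTSS \<gamma> \<eta> (ocand \<gamma> Zs \<eta> Z) $ k =
     (\<gamma>$k * (Zs$k/Z$k) powr (e - 1) / G powr (-\<eta>)) / (\<Sum>l\<in>UNIV. \<gamma>$l * (Zs$l/Z$l) powr (e - 1) / G powr (-\<eta>))"
    unfolding piTSS_def c by simp
  also have "\<dots> = \<gamma>$k * (Zs$k/Z$k) powr (e - 1) / (\<Sum>l\<in>UNIV. \<gamma>$l * (Zs$l/Z$l) powr (e - 1))"
    using G by (simp add: sum_divide_distrib[symmetric])
  finally show ?thesis unfolding e_def .
qed

lemma go_cand:
  fixes Zs \<gamma> Z :: "real^'k::finite"
  assumes Z: "\<forall>k. Z$k > 0" and Zs: "\<forall>k. Zs$k > 0" and g: "\<forall>k. \<gamma>$k > 0" and eta: "\<eta> \<ge> 0"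
  shows "go \<gamma> Zs (piTSS \<gamma> \<eta> (ocand \<gamma> Zs \<eta> Z)) Z (ocand \<gamma> Zs \<eta> Z) = 0"
    and "(\<Sum>l\<in>UNIV. piTSS \<gamma> \<eta> (ocand \<gamma> Zs \<eta> Z) $ l * Zs$l / Z$l) =
       (\<Sum>l\<in>UNIV. \<gamma>$l * (Zs$l/Z$l) powr (1/(1+\<eta>))) / (\<Sum>l\<in>UNIV. \<gamma>$l * (Zs$l/Z$l) powr (1/(1+\<eta>) - 1))"
proof -
  define e where "e = 1/(1+\<eta>)"
  define G where "G = (\<Sum>l\<in>UNIV. \<gamma>$l * (Zs$l/Z$l) powr e)"
  define H where "H = (\<Sum>l\<in>UNIV. \<gamma>$l * (Zs$l/Z$l) powr (e-1))"
  define \<pi> where "\<pi> = piTSS \<gamma> \<eta> (ocand \<gamma> Zs \<eta> Z)"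
  have a: "Zs$k/Z$k > 0" for k using Z Zs by simp
  have ap: "(Zs$k/Z$k) powr t > 0" for k t using a[of k] by (metis powr_gt_zero less_irrefl)
  have G: "G > 0" unfolding G_def by (rule sum_pos) (use g ap in \<open>auto intro!: mult_pos_pos\<close>)
  have H: "H > 0" unfolding H_def by (rule sum_pos) (use g ap in \<open>auto intro!: mult_pos_pos\<close>)
  have pk: "\<pi>$k * Zs$k / Z$k = \<gamma>$k * (Zs$k/Z$k) powr e / H" for k
  proof -
    define x where "x = Zs$k/Z$k"
    have "\<pi>$k * Zs$k / Z$k = \<pi>$k * x" unfolding x_def by simp
    also have "\<dots> = \<gamma>$k * (x powr (e - 1) * x) / H"
      unfolding \<pi>_def pi_cand[OF Z Zs g eta] e_def[symmetric] H_def[symmetric] x_def[symmetric] by simp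
    also have "x powr (e - 1) * x = x powr e"
      using powr_add[of x "e-1" 1] a[of k] unfolding x_def[symmetric] by simp
    finally show ?thesis unfolding x_def .
  qed
  have S: "(\<Sum>l\<in>UNIV. \<pi>$l * Zs$l / Z$l) = G / H"
    unfolding pk G_def by (simp add: sum_divide_distrib[symmetric])
  then show "(\<Sum>l\<in>UNIV. piTSS \<gamma> \<eta> (ocand \<gamma> Zs \<eta> Z) $ l * Zs$l / Z$l) =
       (\<Sum>l\<in>UNIV. \<gamma>$l * (Zs$l/Z$l) powr (1/(1+\<eta>))) / (\<Sum>l\<in>UNIV. \<gamma>$l * (Zs$l/Z$l) powr (1/(1+\<eta>) - 1))"
    unfolding \<pi>_def G_def H_def e_def .
  show "go \<gamma> Zs (piTSS \<gamma> \<eta> (ocand \<gamma> Zs \<eta> Z)) Z (ocand \<gamma> Zs \<eta> Z) = 0"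
    unfolding go_def \<pi>_def[symmetric] S
    using g G H
    by (simp add: vec_eq_iff pk ocand_def e_def[symmetric] G_def[symmetric] less_imp_neq[symmetric])
qed

lemma ostar_eq:
  fixes Zs \<gamma> Z :: "real^'k::finite"
  assumes Z: "\<forall>k. Z$k > 0" and Zs: "\<forall>k. Zs$k > 0" and g: "\<forall>k. \<gamma>$k > 0" and eta: "\<eta> \<ge> 0"
  shows "ostar \<gamma> Zs \<eta> Z = ocand \<gamma> Zs \<eta> Z"
  unfolding ostar_def
proof (rule the_equality)
  define e where "e = 1/(1+\<eta>)"
  define G where "G = (\<Sum>l\<in>UNIV. \<gamma>$l * (Zs$l/Z$l) powr e)"
  have a: "Zs$k/Z$k > 0" for k using Z Zs by simp
  have ap: "(Zs$k/Z$k) powr t > 0" for k t using a[of k] by (metis powr_gt_zero less_irrefl)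
  have G: "G > 0" unfolding G_def by (rule sum_pos) (use g ap in \<open>auto intro!: mult_pos_pos\<close>)
  show "(\<forall>k. 0 < ocand \<gamma> Zs \<eta> Z $ k) \<and> go \<gamma> Zs (piTSS \<gamma> \<eta> (ocand \<gamma> Zs \<eta> Z)) Z (ocand \<gamma> Zs \<eta> Z) = 0"
    using go_cand(1)[OF Z Zs g eta] ap G unfolding ocand_def e_def[symmetric] G_def[symmetric] by simp
  fix ot assume H: "(\<forall>k. 0 < ot $ k) \<and> go \<gamma> Zs (piTSS \<gamma> \<eta> ot) Z ot = 0"
  then have op: "\<And>k. ot$k > 0" and eq: "go \<gamma> Zs (piTSS \<gamma> \<eta> ot) Z ot = 0" by auto
  define T where "T = (\<Sum>l\<in>UNIV. \<gamma>$l * ot$l powr (-\<eta>))"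
  have T: "T > 0" unfolding T_def by (rule sum_pos) (use g op in \<open>auto intro!: mult_pos_pos simp: less_imp_neq[symmetric]\<close>)
  define \<pi> where "\<pi> = piTSS \<gamma> \<eta> ot"
  have pik: "\<pi>$k = \<gamma>$k * ot$k powr (-\<eta>) / T" for k unfolding \<pi>_def piTSS_def T_def by simp
  have pip: "\<pi>$k > 0" for k unfolding pik using g[rule_format, of k] op[of k] T by (simp add: less_imp_neq[symmetric])
  define S where "S = (\<Sum>l\<in>UNIV. \<pi>$l * Zs$l / Z$l)"
  have S: "S > 0" unfolding S_def by (rule sum_pos) (use pip Z Zs in auto)
  have comp: "(1 / \<gamma>$k) * ((\<pi>$k * Zs$k / Z$k) / S) = ot$k" for k
    using eq unfolding go_def \<pi>_def[symmetric] S_def[symmetric] by (simp add: vec_eq_iff)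
  have gk: "\<gamma>$k * ot$k = (\<pi>$k * Zs$k / Z$k) / S" for k
  proof -
    have "\<gamma>$k * ot$k = \<gamma>$k * ((1 / \<gamma>$k) * ((\<pi>$k * Zs$k / Z$k) / S))" using comp[of k] by simp
    also have "\<dots> = (\<pi>$k * Zs$k / Z$k) / S" using g[rule_format, of k] by simp
    finally show ?thesis .
  qed
  have sum1: "(\<Sum>k\<in>UNIV. \<gamma>$k * ot$k) = 1"
    unfolding gk sum_divide_distrib[symmetric] S_def[symmetric] using S by simp
  define c where "c = (1 / (T * S)) powr e"
  have ok: "ot$k = (Zs$k/Z$k) powr e * c" for k
  proof -
    define x where "x = Zs$k/Z$k"
    have x: "x > 0" unfolding x_def using a .
    have "ot$k = ot$k powr (-\<eta>) * x / (T * S)"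
      using comp[of k] g[rule_format, of k] unfolding pik x_def by (auto simp: field_simps)
    then have "ot$k * ot$k powr \<eta> = (ot$k powr (-\<eta>) * ot$k powr \<eta>) * x / (T * S)"
      by (metis (no_types, lifting) mult.commute times_divide_eq_left mult.assoc)
    also have "ot$k powr (-\<eta>) * ot$k powr \<eta> = 1"
      using op[of k] by (simp add: powr_minus field_simps)
    finally have p1: "ot$k powr (1 + \<eta>) = x / (T * S)"
      using op[of k] powr_add[of "ot$k" 1 \<eta>] by simp
    have "ot$k = (ot$k powr (1 + \<eta>)) powr e"
      using op[of k] eta unfolding e_def by (simp add: powr_powr)
    also have "\<dots> = (x / (T * S)) powr e" unfolding p1 ..
    also have "\<dots> = x powr e * c" unfolding c_def
      using x T S by (simp add: powr_divide powr_mult[symmetric] divide_inverse powr_minus)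
    finally show ?thesis unfolding x_def .
  qed
  have "1 = G * c" unfolding sum1[symmetric] G_def ok
    by (simp add: sum_distrib_right mult.assoc)
  then have cG: "c = 1 / G" using G by (simp add: field_simps)
  show "ot = ocand \<gamma> Zs \<eta> Z"
    unfolding vec_eq_iff ocand_def e_def[symmetric] G_def[symmetric]
    using ok cG by simp
qed

theorem proposition2:
  fixes Zs \<gamma> :: "real^'k::finite" and \<epsilon> :: real
  assumes "CARD('k) \<ge> 2"
    and "\<epsilon> > 0"
    and "\<forall>k. Zs$k > 0"
    and "\<gamma> \<in> Peps \<epsilon>"
  shows "\<forall>Z \<eta> \<eta>'. (\<forall>k. Z$k > 0) \<longrightarrow> 0 \<le> \<eta> \<longrightarrow> \<eta> < \<eta>' \<longrightarrow>
     Dfun \<gamma> Zs \<eta>' Z \<le> Dfun \<gamma> Zs \<eta> Z \<and> Dfun \<gamma> Zs \<eta> Z \<le> 0 \<and>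
     ((\<exists>c. Z = c *\<^sub>R Zs) \<longrightarrow> Dfun \<gamma> Zs \<eta>' Z = 0 \<and> Dfun \<gamma> Zs \<eta> Z = 0) \<and>
     ((\<nexists>c. Z = c *\<^sub>R Zs) \<longrightarrow> Dfun \<gamma> Zs \<eta>' Z < Dfun \<gamma> Zs \<eta> Z \<and> Dfun \<gamma> Zs \<eta> Z < 0)"
proof (intro allI impI)
  fix Z :: "real^'k" and \<eta> \<eta>' :: real
  assume Z: "\<forall>k. Z$k > 0" and eta: "0 \<le> \<eta>" and lt: "\<eta> < \<eta>'"
  have Zs: "\<forall>k. Zs$k > 0" using assms(3) .
  have g: "\<forall>k. \<gamma>$k > 0" using assms(2,4) unfolding Peps_def by (auto intro: less_le_trans)
  have s1: "(\<Sum>k\<in>UNIV. \<gamma>$k) = 1" using assms(4) unfolding Peps_def by auto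
  have eta': "0 \<le> \<eta>'" using eta lt by simp
  define a where "a k = Zs$k / Z$k" for k
  have ap: "a k > 0" for k unfolding a_def using Z Zs by simp
  have apw: "a k powr t > 0" for k t using ap[of k] by (metis powr_gt_zero less_irrefl)
  define A where "A = (\<Sum>l\<in>UNIV. \<gamma>$l * (Zs$l / Z$l))"
  define M where "M = (\<Sum>l\<in>UNIV. \<gamma>$l * (Zs$l / Z$l)^2)"
  define X where "X = A^2 - M"
  have A: "A > 0" unfolding A_def
    by (rule sum_pos) (use Z Zs g in auto)
  define G where "G e = (\<Sum>l\<in>UNIV. \<gamma>$l * a l powr e)" for e
  have Gp: "G e > 0" for e unfolding G_def
    by (rule sum_pos) (use g apw in \<open>auto intro!: mult_pos_pos\<close>)
  define P where "P t = (\<Sum>l\<in>UNIV. piTSS \<gamma> t (ostar \<gamma> Zs t Z) $ l * Zs$l / Z$l)" for t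
  have Peq: "P t = G (1/(1+t)) / G (1/(1+t) - 1)" if "t \<ge> 0" for t
    unfolding P_def ostar_eq[OF Z Zs g that] go_cand(2)[OF Z Zs g that] G_def a_def ..
  have Ppos: "P t > 0" if "t \<ge> 0" for t unfolding Peq[OF that] using Gp by simp
  have D: "Dfun \<gamma> Zs t Z = X / (P t * A)" if "t \<ge> 0" for t
  proof -
    have "Dfun \<gamma> Zs t Z = Wd \<gamma> Zs Z (gZ Zs (piTSS \<gamma> t (ostar \<gamma> Zs t Z)) Z)"
      unfolding Dfun_def frechet_derivative_at[OF Vg_deriv[OF Z Zs g s1], symmetric] ..
    also have "\<dots> = X / (P t * A)"
      unfolding X_def A_def M_def P_def
      by (rule Wd_gZ[OF Z Zs g s1]) (use Ppos[OF that] in \<open>simp add: P_def\<close>)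
    finally show ?thesis .
  qed
  have var: "M - A^2 = (\<Sum>k\<in>UNIV. \<gamma>$k * (a k - A)^2)"
  proof -
    have "(\<Sum>k\<in>UNIV. \<gamma>$k * (a k - A)^2) = (\<Sum>k\<in>UNIV. \<gamma>$k * (a k)^2 - 2 * A * (\<gamma>$k * a k) + A^2 * \<gamma>$k)"
      by (rule sum.cong) (simp_all add: power2_diff algebra_simps)
    also have "\<dots> = M - 2 * A * A + A^2 * 1"
      unfolding sum.distrib sum_subtractf sum_distrib_left[symmetric] s1 M_def A_def a_def ..
    finally show ?thesis by (simp add: power2_eq_square)
  qed
  have Xle: "X \<le> 0" unfolding X_def using var
    by (smt (verit) sum_nonneg g mult_nonneg_nonneg zero_le_power2 less_imp_le)
  show "Dfun \<gamma> Zs \<eta>' Z \<le> Dfun \<gamma> Zs \<eta> Z \<and> Dfun \<gamma> Zs \<eta> Z \<le> 0 \<and>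
     ((\<exists>c. Z = c *\<^sub>R Zs) \<longrightarrow> Dfun \<gamma> Zs \<eta>' Z = 0 \<and> Dfun \<gamma> Zs \<eta> Z = 0) \<and>
     ((\<nexists>c. Z = c *\<^sub>R Zs) \<longrightarrow> Dfun \<gamma> Zs \<eta>' Z < Dfun \<gamma> Zs \<eta> Z \<and> Dfun \<gamma> Zs \<eta> Z < 0)"
  proof (cases "\<exists>c. Z = c *\<^sub>R Zs")
    case True
    then obtain c where c: "Z = c *\<^sub>R Zs" by blast
    have ak: "a k = A" for k
    proof -
      have "a l = 1 / c" for l using Zs[rule_format, of l] unfolding a_def c by simp
      then show ?thesis unfolding A_def using s1
        by (simp add: a_def[symmetric] sum_divide_distrib[symmetric])
    qed
    have "X = 0" using var unfolding X_def ak by simp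
    then show ?thesis using True D[OF eta] D[OF eta'] by simp
  next
    case False
    have "\<exists>k0 l0. a k0 \<noteq> a l0"
    proof (rule ccontr)
      assume "\<not> (\<exists>k0 l0. a k0 \<noteq> a l0)"
      then have all: "a k = a k0" for k k0 by auto
      obtain k0 :: 'k where True by simp
      have "Z = (1 / a k0) *\<^sub>R Zs"
        unfolding vec_eq_iff
      proof
        fix k show "Z$k = ((1 / a k0) *\<^sub>R Zs) $ k"
          using all[of k k0] ap[of k] Z[rule_format, of k] Zs[rule_format, of k]
            Z[rule_format, of k0] Zs[rule_format, of k0]
          unfolding a_def by (simp add: field_simps)
      qed
      then show False using False by blast
    qed
    then obtain k0 l0 where ne: "a k0 \<noteq> a l0" by blast
    have "\<exists>k. a k \<noteq> A" using ne by metis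
    then obtain k1 where k1: "a k1 \<noteq> A" by blast
    have "0 < (\<Sum>k\<in>UNIV. \<gamma>$k * (a k - A)^2)"
    proof (rule sum_pos2[where i=k1])
      show "0 < \<gamma>$k1 * (a k1 - A)^2" using g[rule_format, of k1] k1 by simp
      show "0 \<le> \<gamma>$k * (a k - A)^2" for k using g[rule_format, of k] by simp
    qed auto
    then have Xlt: "X < 0" using var unfolding X_def by simp
    define e where "e = 1/(1+\<eta>)"
    define e' where "e' = 1/(1+\<eta>')"
    have ee: "e' < e" unfolding e_def e'_def using eta lt by (simp add: frac_less2)
    have "G e' * G (e - 1) < G e * G (e' - 1)"
      unfolding G_def using ratio_mono[OF g _ ee ne] ap by simp
    then have Plt: "P \<eta>' < P \<eta>"
      unfolding Peq[OF eta] Peq[OF eta'] e_def[symmetric] e'_def[symmetric]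
      using Gp by (simp add: divide_less_eq less_divide_eq mult.commute mult.left_commute)
    have "X / (P \<eta>' * A) < X / (P \<eta> * A)"
      by (rule divide_strict_left_mono_neg) (use Plt A Ppos[OF eta] Ppos[OF eta'] Xlt in auto)
    moreover have "X / (P \<eta> * A) < 0"
      using Xlt A Ppos[OF eta] by (simp add: divide_neg_pos)
    ultimately show ?thesis using False D[OF eta] D[OF eta'] by simp
  qed
qed

end
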